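(* Let $p$ be a prime, $n,m\ge1$ integers with $p>n+m+2$, $q$ a power of $p$, and let $\mathrm{res}_{n,m}\in\mathbb{F}_q[a_0,\dots,a_n,b_0,\dots,b_m]$ be the generic resultant of $f=\sum_{0\le i\le n}a_ix^i$ and $g=\sum_{0\le i\le m}b_ix^i$. Then there is no nonzero $u\in\mathbb{F}_q^{n+m+2}$ such that $\mathrm{res}_{n,m}$ shifted by $u$ equals $\mathrm{res}_{n,m}$; i.e. $\mathrm{res}_{n,m}$ is not shift-invariant.
   Context: The generic resultant $\mathrm{res}_{n,m}$ is the determinant of the $(n+m)\times(n+m)$ Sylvester matrix of $f$ and $g$ with indeterminate coefficients $a_0,\dots,a_n,b_0,\dots,b_m$. A polynomial $F$ in $N$ variables $z$ shifted by $u\in\mathbb{F}_q^N$ is $F(z-u)$. *)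

theory Defs
  imports "Subresultants.Resultant_Prelim" "HOL-Library.Poly_Mapping"
begin

text \<open>Multivariate polynomials over 'a in the variables z_0, z_1, ...:
  finitely supported maps from monomials (exponent vectors) to coefficients.\<close>
type_synonym 'a mpoly = "(nat \<Rightarrow>\<^sub>0 nat) \<Rightarrow>\<^sub>0 'a"

definition mp_const :: "'a::zero \<Rightarrow> 'a mpoly" where
  "mp_const c = Poly_Mapping.single 0 c"

definition mp_var :: "nat \<Rightarrow> 'a::{zero,one} mpoly" where
  "mp_var i = Poly_Mapping.single (Poly_Mapping.single i 1) 1"

definition mp_subst :: "(nat \<Rightarrow> 'a::comm_ring_1 mpoly) \<Rightarrow> 'a mpoly \<Rightarrow> 'a mpoly" where
  "mp_subst \<sigma> P = (\<Sum>\<mu>\<in>Poly_Mapping.keys P.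
      mp_const (Poly_Mapping.lookup P \<mu>) *
      (\<Prod>i\<in>Poly_Mapping.keys \<mu>. \<sigma> i ^ Poly_Mapping.lookup \<mu> i))"

definition mp_shift :: "'a::comm_ring_1 mpoly \<Rightarrow> (nat \<Rightarrow> 'a) \<Rightarrow> 'a mpoly" where
  "mp_shift F u = mp_subst (\<lambda>i. mp_var i - mp_const (u i)) F"

text \<open>Generic resultant res_{n,m}: determinant of the (n+m)x(n+m) Sylvester matrix of
  f = sum_{i<=n} a_i x^i and g = sum_{j<=m} b_j x^j, where a_i = z_i and b_j = z_(n+1+j).\<close>
definition generic_f :: "nat \<Rightarrow> 'a::comm_ring_1 mpoly poly" where
  "generic_f n = (\<Sum>i\<le>n. monom (mp_var i) i)"

definition generic_g :: "nat \<Rightarrow> nat \<Rightarrow> 'a::comm_ring_1 mpoly poly" where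
  "generic_g n m = (\<Sum>j\<le>m. monom (mp_var (n + 1 + j)) j)"

definition generic_res :: "nat \<Rightarrow> nat \<Rightarrow> 'a::comm_ring_1 mpoly" where
  "generic_res n m = det (sylvester_mat_sub n m (generic_f n) (generic_g n m))"

end

theory Submission
  imports Defs
begin


definition mon :: "(nat \<Rightarrow> 'a::comm_ring_1) \<Rightarrow> (nat \<Rightarrow>\<^sub>0 nat) \<Rightarrow> 'a" where
  "mon x \<mu> = (\<Prod>i\<in>Poly_Mapping.keys \<mu>. x i ^ Poly_Mapping.lookup \<mu> i)"

definition ev :: "(nat \<Rightarrow> 'a::comm_ring_1) \<Rightarrow> 'a mpoly \<Rightarrow> 'a" where
  "ev x P = (\<Sum>\<mu>\<in>Poly_Mapping.keys P. Poly_Mapping.lookup P \<mu> * mon x \<mu>)"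

lemma mon_superset: "finite S \<Longrightarrow> Poly_Mapping.keys \<mu> \<subseteq> S \<Longrightarrow>
   mon x \<mu> = (\<Prod>i\<in>S. x i ^ Poly_Mapping.lookup \<mu> i)"
  unfolding mon_def
  by (rule prod.mono_neutral_left) (auto simp: in_keys_iff)

lemma mon_add: "mon x (\<mu> + \<nu>) = mon x \<mu> * mon x \<nu>"
proof -
  let ?S = "Poly_Mapping.keys \<mu> \<union> Poly_Mapping.keys \<nu>"
  have "Poly_Mapping.keys (\<mu> + \<nu>) \<subseteq> ?S" by (simp add: keys_add)
  then have "mon x (\<mu> + \<nu>) = (\<Prod>i\<in>?S. x i ^ Poly_Mapping.lookup (\<mu>+\<nu>) i)"
    by (intro mon_superset) auto
  also have "\<dots> = (\<Prod>i\<in>?S. x i ^ Poly_Mapping.lookup \<mu> i) * (\<Prod>i\<in>?S. x i ^ Poly_Mapping.lookup \<nu> i)"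
    by (simp add: lookup_add power_add prod.distrib)
  also have "\<dots> = mon x \<mu> * mon x \<nu>"
    by (subst (1 2) mon_superset[of ?S]) auto
  finally show ?thesis .
qed

lemma mon_zero[simp]: "mon x 0 = 1" by (simp add: mon_def)

lemma ev_superset: "finite S \<Longrightarrow> Poly_Mapping.keys P \<subseteq> S \<Longrightarrow>
   ev x P = (\<Sum>\<mu>\<in>S. Poly_Mapping.lookup P \<mu> * mon x \<mu>)"
  unfolding ev_def
  by (rule sum.mono_neutral_left) (auto simp: in_keys_iff)

lemma ev_add: "ev x (P + Q) = ev x P + ev x Q"
proof -
  let ?S = "Poly_Mapping.keys P \<union> Poly_Mapping.keys Q"
  have "Poly_Mapping.keys (P + Q) \<subseteq> ?S" by (simp add: keys_add)
  then have "ev x (P + Q) = (\<Sum>\<mu>\<in>?S. Poly_Mapping.lookup (P+Q) \<mu> * mon x \<mu>)"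
    by (intro ev_superset) auto
  also have "\<dots> = (\<Sum>\<mu>\<in>?S. Poly_Mapping.lookup P \<mu> * mon x \<mu>) + (\<Sum>\<mu>\<in>?S. Poly_Mapping.lookup Q \<mu> * mon x \<mu>)"
    by (simp add: lookup_add distrib_right sum.distrib)
  also have "\<dots> = ev x P + ev x Q"
    by (subst (1 2) ev_superset[of ?S]) auto
  finally show ?thesis .
qed

lemma ev_zero[simp]: "ev x 0 = 0" by (simp add: ev_def)

lemma ev_sum: "ev x (sum f A) = (\<Sum>a\<in>A. ev x (f a))"
  by (induction A rule: infinite_finite_induct) (auto simp: ev_add)

lemma ev_single[simp]: "ev x (Poly_Mapping.single \<mu> c) = c * mon x \<mu>"
  by (cases "c = 0") (auto simp: ev_def)

lemma pm_expand: "P = (\<Sum>\<mu>\<in>Poly_Mapping.keys P. Poly_Mapping.single \<mu> (Poly_Mapping.lookup P \<mu>))"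
  by (rule poly_mapping_eqI)
     (auto simp: lookup_sum lookup_single when_def in_keys_iff sum.delta cong: sum.cong)

lemma ev_mult: "ev x (P * Q) = ev x P * ev x Q"
proof -
  have "P * Q = (\<Sum>\<mu>\<in>Poly_Mapping.keys P. Poly_Mapping.single \<mu> (Poly_Mapping.lookup P \<mu>)) *
     (\<Sum>\<nu>\<in>Poly_Mapping.keys Q. Poly_Mapping.single \<nu> (Poly_Mapping.lookup Q \<nu>))"
    by (subst (1) pm_expand, subst (1) pm_expand[of Q]) simp
  also have "\<dots> = (\<Sum>\<mu>\<in>Poly_Mapping.keys P. \<Sum>\<nu>\<in>Poly_Mapping.keys Q.
       Poly_Mapping.single (\<mu>+\<nu>) (Poly_Mapping.lookup P \<mu> * Poly_Mapping.lookup Q \<nu>))"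
    by (simp add: sum_product mult_single)
  finally have "ev x (P*Q) = (\<Sum>\<mu>\<in>Poly_Mapping.keys P. \<Sum>\<nu>\<in>Poly_Mapping.keys Q.
       Poly_Mapping.lookup P \<mu> * Poly_Mapping.lookup Q \<nu> * (mon x \<mu> * mon x \<nu>))"
    by (simp add: ev_sum mon_add)
  also have "\<dots> = ev x P * ev x Q"
    unfolding ev_def sum_product by (simp add: algebra_simps)
  finally show ?thesis .
qed

lemma ev_one: "ev x 1 = 1"
proof -
  have "(1::'a mpoly) = Poly_Mapping.single 0 1" by simp
  then show ?thesis by (metis ev_single mon_zero mult_1)
qed

interpretation ev_hom: comm_ring_hom "ev x"
  by unfold_locales (auto simp: ev_add ev_mult ev_one)

lemma ev_const[simp]: "ev x (mp_const c) = c" by (simp add: mp_const_def)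
lemma ev_var[simp]: "ev x (mp_var i) = x i"
  by (simp add: mp_var_def mon_def)

lemma ev_shift: "ev x (mp_shift F u) = ev (\<lambda>i. x i - u i) F"
  unfolding mp_shift_def mp_subst_def
  by (simp add: ev_def[of _ F] ev_hom.hom_sum ev_hom.hom_mult ev_hom.hom_prod ev_hom.hom_power
        ev_hom.hom_minus mon_def)




lemma diag_prod:
  fixes f g :: "'a::comm_ring_1 poly"
  shows "prod_list (diag_mat (sylvester_mat_sub n m f g)) = coeff f n ^ m * coeff g 0 ^ n"
proof -
  let ?A = "sylvester_mat_sub n m f g"
  have "prod_list (diag_mat ?A) = (\<Prod>i = 0..<n+m. ?A $$ (i,i))"
    by (simp add: prod_list_diag_prod)
  also have "\<dots> = (\<Prod>i = 0..<m. ?A $$ (i,i)) * (\<Prod>i = m..<n+m. ?A $$ (i,i))"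
    by (rule prod.atLeastLessThan_concat[symmetric]) auto
  also have "(\<Prod>i = 0..<m. ?A $$ (i,i)) = (\<Prod>i = 0..<m. coeff f n)"
    by (rule prod.cong) (auto simp: sylvester_mat_sub_index)
  also have "(\<Prod>i = m..<n+m. ?A $$ (i,i)) = (\<Prod>i = m..<n+m. coeff g 0)"
    by (rule prod.cong) (auto simp: sylvester_mat_sub_index)
  finally show ?thesis by simp
qed

lemma det_tri:
  fixes f g :: "'a::comm_ring_1 poly"
  assumes "(\<forall>k<n. coeff f k = 0) \<or> (\<forall>k\<ge>1. coeff g k = 0)"
  shows "det (sylvester_mat_sub n m f g) = coeff f n ^ m * coeff g 0 ^ n"
  using assms
proof
  assume h: "\<forall>k<n. coeff f k = 0"
  have "det (sylvester_mat_sub n m f g) = prod_list (diag_mat (sylvester_mat_sub n m f g))"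
    by (rule det_lower_triangular[of "n+m"]) (auto simp: sylvester_mat_sub_index h)
  then show ?thesis by (simp add: diag_prod)
next
  assume h: "\<forall>k\<ge>1. coeff g k = 0"
  have "det (sylvester_mat_sub n m f g) = prod_list (diag_mat (sylvester_mat_sub n m f g))"
    by (rule det_upper_triangular[of _ "n+m"]) (auto simp: upper_triangular_def sylvester_mat_sub_index h)
  then show ?thesis by (simp add: diag_prod)
qed




lemma poly_as_sum: 
  fixes P :: "'a::comm_ring_1 poly"
  assumes "degree P < N"
  shows "(\<Sum>j<N. coeff P (N - Suc j) * r ^ (N - Suc j)) = poly P r"
proof -
  have "(\<Sum>j<N. coeff P (N - Suc j) * r ^ (N - Suc j)) = (\<Sum>k<N. coeff P k * r ^ k)"
    by (rule sum.nat_diff_reindex)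
  also have "\<dots> = (\<Sum>k\<le>degree P. coeff P k * r ^ k)"
    using assms by (intro sum.mono_neutral_right) (auto simp: coeff_eq_0)
  also have "\<dots> = poly P r" by (simp add: poly_altdef)
  finally show ?thesis .
qed

lemma det_common_root:
  fixes f g :: "'a::field poly"
  assumes df: "degree f \<le> n" and dg: "degree g \<le> m" and nm: "n + m \<ge> 1"
    and rf: "poly f r = 0" and rg: "poly g r = 0"
  shows "det (sylvester_mat_sub n m f g) = 0"
proof -
  let ?N = "n + m"
  let ?A = "sylvester_mat_sub n m f g"
  define v where "v = vec ?N (\<lambda>j. r ^ (?N - Suc j))"
  have vc: "v \<in> carrier_vec ?N" by (simp add: v_def)
  have vnz: "v \<noteq> 0\<^sub>v ?N"
  proof
    assume "v = 0\<^sub>v ?N"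
    moreover have "?N - 1 < ?N" using nm by simp
    moreover have "?N - Suc (?N - 1) = 0" using nm by simp
    then have "v $ (?N - 1) = 1" using nm by (simp add: v_def)
    ultimately show False by simp
  qed
  have "?A *\<^sub>v v = 0\<^sub>v ?N"
  proof (rule eq_vecI)
    fix i assume i: "i < dim_vec (0\<^sub>v ?N :: 'a vec)"
    then have i: "i < ?N" by simp
    have "(?A *\<^sub>v v) $ i = (\<Sum>j<?N. ?A $$ (i,j) * r ^ (?N - Suc j))"
      using i by (simp add: mult_mat_vec_def scalar_prod_def v_def atLeast0LessThan)
    also have "\<dots> = 0"
    proof (cases "i < m")
      case True
      define P where "P = monom 1 (m - Suc i) * f"
      have ent: "?A $$ (i,j) = coeff P (?N - Suc j)" if j: "j < ?N" for j
      proof -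
        have "?A $$ (i,j) = (if i \<le> j \<and> j - i \<le> n then coeff f (n + i - j) else 0)"
          using True i j by (simp add: sylvester_mat_sub_index)
        also have "\<dots> = coeff P (?N - Suc j)"
          using True j df unfolding P_def coeff_monom_mult
          by (auto simp: coeff_eq_0 intro!: arg_cong[where f="coeff f"])
        finally show ?thesis .
      qed
      have "degree P \<le> (m - Suc i) + n" unfolding P_def
        by (meson add_mono degree_mult_le degree_monom_le df order_trans)
      moreover have "m - Suc i + n < n + m" using True by simp
      ultimately have "degree P < ?N" by linarith
      then have "(\<Sum>j<?N. ?A $$ (i,j) * r ^ (?N - Suc j)) = poly P r"
        using ent by (simp add: poly_as_sum[symmetric])
      also have "\<dots> = 0" by (simp add: P_def poly_monom rf)
      finally show ?thesis .
    next
      case False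
      define P where "P = monom 1 (?N - Suc i) * g"
      have ent: "?A $$ (i,j) = coeff P (?N - Suc j)" if j: "j < ?N" for j
      proof -
        have "?A $$ (i,j) = (if i - m \<le> j \<and> j \<le> i then coeff g (i - j) else 0)"
          using False i j by (simp add: sylvester_mat_sub_index)
        also have "\<dots> = coeff P (?N - Suc j)"
          using False i j dg unfolding P_def coeff_monom_mult
          by (auto simp: coeff_eq_0 intro!: arg_cong[where f="coeff g"])
        finally show ?thesis .
      qed
      have "degree P \<le> (?N - Suc i) + m" unfolding P_def
        by (meson add_mono degree_mult_le degree_monom_le dg order_trans)
      moreover have "?N - Suc i + m < n + m" using False i by simp
      ultimately have "degree P < ?N" by linarith
      then have "(\<Sum>j<?N. ?A $$ (i,j) * r ^ (?N - Suc j)) = poly P r"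
        using ent by (simp add: poly_as_sum[symmetric])
      also have "\<dots> = 0" by (simp add: P_def poly_monom rg)
      finally show ?thesis .
    qed
    finally show "(?A *\<^sub>v v) $ i = 0\<^sub>v ?N $ i" using i by simp
  qed auto
  then show ?thesis
    using det_0_iff_vec_prod_zero_field[of ?A ?N] vc vnz sylvester_mat_sub_carrier[of n m f g] by blast
qed




definition fp :: "nat \<Rightarrow> (nat \<Rightarrow> 'a::comm_ring_1) \<Rightarrow> 'a poly" where
  "fp n x = (\<Sum>i\<le>n. monom (x i) i)"
definition gp :: "nat \<Rightarrow> nat \<Rightarrow> (nat \<Rightarrow> 'a::comm_ring_1) \<Rightarrow> 'a poly" where
  "gp n m x = (\<Sum>j\<le>m. monom (x (n + 1 + j)) j)"

lemma coeff_fp: "coeff (fp n x) k = (if k \<le> n then x k else 0)"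
  by (simp add: fp_def coeff_sum coeff_monom)
lemma coeff_gp: "coeff (gp n m x) k = (if k \<le> m then x (n + 1 + k) else 0)"
  by (simp add: gp_def coeff_sum coeff_monom)
lemma degree_fp: "degree (fp n x) \<le> n"
  by (rule degree_le) (simp add: coeff_fp)
lemma degree_gp: "degree (gp n m x) \<le> m"
  by (rule degree_le) (simp add: coeff_gp)
lemma poly_fp: "poly (fp n x) r = (\<Sum>i\<le>n. x i * r ^ i)"
  by (simp add: fp_def poly_sum poly_monom)
lemma poly_gp: "poly (gp n m x) r = (\<Sum>j\<le>m. x (n + 1 + j) * r ^ j)"
  by (simp add: gp_def poly_sum poly_monom)

lemma res_eval: "ev x (generic_res n m) = det (sylvester_mat_sub n m (fp n x) (gp n m x))"
proof -
  have f: "map_poly (ev x) (generic_f n) = fp n x"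
    by (rule poly_eqI) (simp add: coeff_map_poly coeff_fp generic_f_def coeff_sum coeff_monom)
  have g: "map_poly (ev x) (generic_g n m) = gp n m x"
    by (rule poly_eqI) (simp add: coeff_map_poly coeff_gp generic_g_def coeff_sum coeff_monom)
  show ?thesis
    unfolding generic_res_def ev_hom.hom_det[symmetric] sylvester_mat_sub_map[of "ev x", OF ev_hom.hom_zero] f g ..
qed

lemma non_root:
  fixes H :: "'a::{finite,field} poly"
  assumes "H \<noteq> 0" "prime (CHAR('a))" "degree H < CHAR('a)"
  shows "\<exists>r. poly H r \<noteq> 0"
proof (rule ccontr)
  let ?p = "CHAR('a)"
  assume "\<not> ?thesis"
  then have "of_nat ` {..<?p} \<subseteq> {x::'a. poly H x = 0}" by auto
  then have "card (of_nat ` {..<?p} :: 'a set) \<le> card {x::'a. poly H x = 0}"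
    by (intro card_mono) auto
  also have "\<dots> \<le> degree H" by (rule card_poly_roots_bound[OF assms(1)])
  finally have c: "card (of_nat ` {..<?p} :: 'a set) < ?p" using assms(3) by linarith
  have "inj_on (of_nat :: nat \<Rightarrow> 'a) {..<?p}"
  proof (rule inj_onI)
    fix i j assume ij: "i \<in> {..<?p}" "j \<in> {..<?p}" "(of_nat i :: 'a) = of_nat j"
    show "i = j"
    proof (rule ccontr)
      assume "i \<noteq> j"
      then consider "i < j" | "j < i" by linarith
      then show False
      proof cases
        case 1
        then have "(of_nat (j - i) :: 'a) = 0" using ij(3) by (simp add: of_nat_diff)
        then have "?p dvd (j - i)" by (simp add: of_nat_eq_0_iff_char_dvd)
        then show False using 1 ij(2) by (meson diff_le_self dvd_imp_le leD le_less_trans zero_less_diff lessThan_iff)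
      next
        case 2
        then have "(of_nat (i - j) :: 'a) = 0" using ij(3) by (simp add: of_nat_diff)
        then have "?p dvd (i - j)" by (simp add: of_nat_eq_0_iff_char_dvd)
        then show False using 2 ij(1) by (meson diff_le_self dvd_imp_le leD le_less_trans zero_less_diff lessThan_iff)
      qed
    qed
  qed
  then have "card (of_nat ` {..<?p} :: 'a set) = ?p" by (simp add: card_image)
  then show False using c by simp
qed




theorem mainTheorem18:
  fixes p n m :: nat
    and u :: "nat \<Rightarrow> 'a::{finite,field}"
  assumes "prime p" and "CHAR('a) = p"
    and "n \<ge> 1" and "m \<ge> 1" and "p > n + m + 2"
    and "\<forall>i \<ge> n + m + 2. u i = 0"
    and "mp_shift (generic_res n m :: 'a mpoly) u = generic_res n m"
  shows "\<forall>i < n + m + 2. u i = 0"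
proof -
  note n1 = assms(3) and m1 = assms(4)
  define R where "R x = det (sylvester_mat_sub n m (fp n x) (gp n m x))" for x :: "nat \<Rightarrow> 'a"
  have key: "R (\<lambda>i. y i + u i) = R y" for y
  proof -
    have "ev (\<lambda>i. y i + u i) (mp_shift (generic_res n m :: 'a mpoly) u)
        = ev (\<lambda>i. y i + u i) (generic_res n m)" using assms(7) by simp
    then show ?thesis by (simp add: ev_shift res_eval R_def)
  qed
  have tri: "R y = y n ^ m * y (n+1) ^ n"
    if "(\<forall>k<n. y k = 0) \<or> (\<forall>j\<ge>1. j \<le> m \<longrightarrow> y (n + 1 + j) = 0)" for y
    unfolding R_def using that
    by (subst det_tri) (auto simp: coeff_fp coeff_gp)
  have cr: "R y = 0" if "(\<Sum>i\<le>n. y i * r ^ i) = 0" "(\<Sum>j\<le>m. y (n + 1 + j) * r ^ j) = 0" for y r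
    unfolding R_def using that n1
    by (intro det_common_root[OF degree_fp degree_gp, where r=r]) (auto simp: poly_fp poly_gp)
  have st1: "s ^ m * t ^ n = (s + u n) ^ m * (t + u (n+1)) ^ n" for s t
  proof -
    define y where "y i = (if i < n then - u i else if i = n then s else if i = n + 1 then t else 0)" for i
    have "R y = s ^ m * t ^ n" by (subst tri) (auto simp: y_def)
    moreover have "R (\<lambda>i. y i + u i) = (s + u n) ^ m * (t + u (n+1)) ^ n"
      by (subst tri) (auto simp: y_def)
    ultimately show ?thesis using key[of y] by simp
  qed
  have un: "u n = 0"
  proof -
    have "(- u n) ^ m = 0" using st1[of "- u n" 1] m1 by (simp add: zero_power)
    then show ?thesis by simp
  qed
  have un1: "u (n+1) = 0"
  proof -
    have "(- u (n+1)) ^ n = 0" using st1[of 1 "- u (n+1)"] n1 by (simp add: zero_power)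
    then show ?thesis by simp
  qed
  have un1': "u (Suc n) = 0" using un1 by simp
  have pch: "m < CHAR('a)" "n < CHAR('a)" "prime (CHAR('a))" using assms(1,2,5) by auto
  have st2: "u (n+1+j) = 0" if j1: "1 \<le> j" and jm: "j \<le> m" for j
  proof (rule ccontr)
    assume nz: "u (n+1+j) \<noteq> 0"
    define H where "H = (\<Sum>k\<in>{1..m}. monom (u (n+1+k)) k)"
    have cH: "coeff H k = (if 1 \<le> k \<and> k \<le> m then u (n+1+k) else 0)" for k
      by (simp add: H_def coeff_sum coeff_monom)
    have Hnz: "H \<noteq> 0" using cH[of j] j1 jm nz by auto
    have "degree H \<le> m" by (rule degree_le) (simp add: cH)
    then obtain r where r: "poly H r \<noteq> 0" using non_root[OF Hnz pch(3)] pch(1) by force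
    have pH: "poly H r = (\<Sum>k\<in>{1..m}. u (n+1+k) * r ^ k)" by (simp add: H_def poly_sum poly_monom)
    define y where "y i = (if i = 0 then - (r ^ n) else if i < n then 0 else if i = n then 1
       else if i = n+1 then poly H r else if i \<le> n+1+m then - u i else 0)" for i
    have fs: "(\<Sum>i\<le>n. y i * r ^ i) = 0"
    proof -
      have "(\<Sum>i\<le>n. y i * r ^ i) = (\<Sum>i\<le>n. (if i = 0 then - (r ^ n) else 0) + (if i = n then r ^ n else 0))"
        by (rule sum.cong) (use n1 in \<open>auto simp: y_def\<close>)
      also have "\<dots> = 0" by (simp add: sum.distrib)
      finally show ?thesis .
    qed
    have gs: "(\<Sum>j\<le>m. y (n + 1 + j) * r ^ j) = 0"
    proof -
      have e: "{..m} = insert 0 {1..m}" by auto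
      have "(\<Sum>j\<in>{1..m}. y (n + 1 + j) * r ^ j) = (\<Sum>j\<in>{1..m}. - (u (n+1+j) * r ^ j))"
        by (rule sum.cong) (auto simp: y_def)
      then show ?thesis unfolding e by (simp add: y_def pH sum_negf)
    qed
    have "R y = 0" by (rule cr[OF fs gs])
    moreover have "R (\<lambda>i. y i + u i) = (poly H r) ^ n"
      by (subst tri) (use n1 in \<open>auto simp: y_def un un1 un1'\<close>)
    ultimately show False using key[of y] r by simp
  qed
  have st3: "u k = 0" if kn: "k < n" for k
  proof (rule ccontr)
    assume nz: "u k \<noteq> 0"
    define H where "H = (\<Sum>i<n. monom (u i) (Suc i))"
    have cH: "coeff H l = (\<Sum>i<n. if Suc i = l then u i else 0)" for l
      by (simp add: H_def coeff_sum coeff_monom)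
    have "coeff H (Suc k) = u k" unfolding cH using kn by simp
    then have Hnz: "H \<noteq> 0" using nz by auto
    have "degree H \<le> n" by (rule degree_le) (auto simp: cH intro!: sum.neutral)
    then obtain r where r: "poly H r \<noteq> 0" using non_root[OF Hnz pch(3)] pch(2) by force
    define h where "h = (\<Sum>i<n. u i * r ^ i)"
    have "poly H r = r * h" by (simp add: H_def h_def poly_sum poly_monom sum_distrib_left algebra_simps)
    then have r0: "r \<noteq> 0" and h0: "h \<noteq> 0" using r by auto
    define y where "y i = (if i < n then - u i else if i = n then h / r ^ n else if i = n+1 then r
       else if i = n+2 then -1 else 0)" for i
    have fs: "(\<Sum>i\<le>n. y i * r ^ i) = 0"
    proof -
      have "(\<Sum>i\<le>n. y i * r ^ i) = (\<Sum>i<n. y i * r ^ i) + y n * r ^ n"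
        by (simp add: lessThan_Suc_atMost[symmetric])
      also have "(\<Sum>i<n. y i * r ^ i) = - h"
        by (simp add: h_def y_def sum_negf[symmetric])
      also have "y n * r ^ n = h" using r0 by (simp add: y_def)
      finally show ?thesis by simp
    qed
    have gs: "(\<Sum>j\<le>m. y (n + 1 + j) * r ^ j) = 0"
    proof -
      have "(\<Sum>j\<le>m. y (n + 1 + j) * r ^ j) = (\<Sum>j\<le>m. (if j = 0 then r else 0) + (if j = 1 then - r else 0))"
        by (rule sum.cong) (auto simp: y_def)
      also have "\<dots> = 0" using m1 by (simp add: sum.distrib)
      finally show ?thesis .
    qed
    have "R y = 0" by (rule cr[OF fs gs])
    moreover have "R (\<lambda>i. y i + u i) = (h / r ^ n) ^ m * r ^ n"
      by (subst tri) (use n1 in \<open>auto simp: y_def un un1 un1'\<close>)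
    ultimately show False using key[of y] r0 h0 by simp
  qed
  show ?thesis
  proof (intro allI impI)
    fix i assume i: "i < n + m + 2"
    show "u i = 0"
    proof (cases "i < n")
      case True then show ?thesis by (rule st3)
    next
      case False
      then consider "i = n" | "i = n + 1" | "i \<ge> n + 2" by linarith
      then show ?thesis
      proof cases
        case 3
        then have "u (n + 1 + (i - n - 1)) = 0" using i by (intro st2) auto
        moreover have "n + 1 + (i - n - 1) = i" using 3 by simp
        ultimately show ?thesis by simp
      qed (use un un1 in auto)
    qed
  qed
qed


end
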